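(* Let $S$ be a finitely generated cancellative semigroup which cannot be embedded in a group. Then $|\Omega S|=2^{\aleph_0}$.
   Context: $S$ is cancellative if both $ax=ay\Rightarrow x=y$ and $xa=ya\Rightarrow x=y$ for all $a,x,y\in S$. A digraph on $\Omega$ is a subset $\Gamma\subseteq\Omega\times\Omega$. A path is a sequence of pairwise distinct vertices $(v_0,v_1,\ldots)$ with $(v_i,v_{i+1})\in\Gamma$ (length 0 allowed); a ray is an infinite path; an anti-ray is an infinite sequence of distinct vertices with $(v_{i+1},v_i)\in\Gamma$. For infinite $\Sigma',\Sigma\subseteq\Omega$, $\Sigma'\preccurlyeq\Sigma$ means there are infinitely many pairwise vertex-disjoint paths from vertices of $\Sigma'$ to vertices of $\Sigma$. On rays and anti-rays $\preccurlyeq$ is a preorder with associated equivalence $\approx$; the ends are the $\approx$-classes of rays and anti-rays, and $\Omega\Gamma$ is the poset of ends. The right Cayley graph $\Gamma_r(S,A)$ has vertex set $S$ and edges $(x,xa)$, $x\in S$, $a\in A$. For finitely generated $S$, $\Omega S:=\Omega\Gamma_r(S,A)$ for any finite generating set $A$ (well defined up to isomorphism). *)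

theory Defs
  imports "HOL-Algebra.Group" "HOL-Library.Equipollence"
begin

definition cancellative :: "'a::semigroup_mult itself \<Rightarrow> bool" where
  "cancellative _ \<longleftrightarrow>
     (\<forall>(a::'a) x y. a * x = a * y \<longrightarrow> x = y) \<and> (\<forall>(a::'a) x y. x * a = y * a \<longrightarrow> x = y)"

inductive_set generated :: "'a::semigroup_mult set \<Rightarrow> 'a set" for A where
  gen_base: "a \<in> A \<Longrightarrow> a \<in> generated A"
| gen_step: "x \<in> generated A \<Longrightarrow> a \<in> A \<Longrightarrow> x * a \<in> generated A"

text \<open>A finitely generated semigroup is countable, so
  it embeds into some group iff it embeds into a group whose carrier consists of
  natural numbers (take the subgroup generated by the image and transport it).\<close>
definition embeds_in_group :: "'a::semigroup_mult itself \<Rightarrow> bool" where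
  "embeds_in_group _ \<longleftrightarrow>
     (\<exists>(G :: nat monoid) (f :: 'a \<Rightarrow> nat). group G \<and> inj f \<and> range f \<subseteq> carrier G \<and>
        (\<forall>x y. f (x * y) = f x \<otimes>\<^bsub>G\<^esub> f y))"

type_synonym 'a digraph = "('a \<times> 'a) set"

definition is_path :: "'a digraph \<Rightarrow> 'a list \<Rightarrow> bool" where
  "is_path \<Gamma> p \<longleftrightarrow> p \<noteq> [] \<and> distinct p \<and>
     (\<forall>i. Suc i < length p \<longrightarrow> (p ! i, p ! Suc i) \<in> \<Gamma>)"

definition is_ray :: "'a digraph \<Rightarrow> (nat \<Rightarrow> 'a) \<Rightarrow> bool" where
  "is_ray \<Gamma> r \<longleftrightarrow> inj r \<and> (\<forall>i. (r i, r (Suc i)) \<in> \<Gamma>)"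

definition is_antiray :: "'a digraph \<Rightarrow> (nat \<Rightarrow> 'a) \<Rightarrow> bool" where
  "is_antiray \<Gamma> r \<longleftrightarrow> inj r \<and> (\<forall>i. (r (Suc i), r i) \<in> \<Gamma>)"

text \<open>\<Sigma>' \<preccurlyeq> \<Sigma>: infinitely many pairwise vertex-disjoint paths from \<Sigma>' to \<Sigma>
  (an infinite family indexed by nat; pairwise disjointness forces distinctness).\<close>
definition reaches :: "'a digraph \<Rightarrow> 'a set \<Rightarrow> 'a set \<Rightarrow> bool" where
  "reaches \<Gamma> \<Sigma>' \<Sigma> \<longleftrightarrow>
     (\<exists>P :: nat \<Rightarrow> 'a list. (\<forall>n. is_path \<Gamma> (P n) \<and> hd (P n) \<in> \<Sigma>' \<and> last (P n) \<in> \<Sigma>) \<and>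
        (\<forall>n m. n \<noteq> m \<longrightarrow> set (P n) \<inter> set (P m) = {}))"

definition rays_antirays :: "'a digraph \<Rightarrow> (nat \<Rightarrow> 'a) set" where
  "rays_antirays \<Gamma> = {r. is_ray \<Gamma> r \<or> is_antiray \<Gamma> r}"

definition end_equiv :: "'a digraph \<Rightarrow> ((nat \<Rightarrow> 'a) \<times> (nat \<Rightarrow> 'a)) set" where
  "end_equiv \<Gamma> = {(r, s). r \<in> rays_antirays \<Gamma> \<and> s \<in> rays_antirays \<Gamma> \<and>
      reaches \<Gamma> (range r) (range s) \<and> reaches \<Gamma> (range s) (range r)}"

definition ends :: "'a digraph \<Rightarrow> (nat \<Rightarrow> 'a) set set" where
  "ends \<Gamma> = rays_antirays \<Gamma> // end_equiv \<Gamma>"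

definition right_cayley :: "'a::semigroup_mult set \<Rightarrow> 'a digraph" where
  "right_cayley A = {(x, x * a) | x a. a \<in> A}"

end

theory Submission
  imports Defs
begin


locale ore =
  fixes dummy :: "'a::semigroup_mult itself"
  assumes lc: "\<And>(a::'a) x y. a * x = a * y \<Longrightarrow> x = y"
    and rc: "\<And>(a::'a) x y. x * a = y * a \<Longrightarrow> x = y"
    and ore: "\<And>(a::'a) b. \<exists>x y. a * x = b * y"
    and cnt: "countable (UNIV :: 'a set)"
begin

definition rel :: "'a \<times> 'a \<Rightarrow> 'a \<times> 'a \<Rightarrow> bool" where
  "rel u v \<longleftrightarrow> (\<forall>x y. snd u * x = snd v * y \<longrightarrow> fst u * x = fst v * y)"

lemma rel_refl: "rel u u"
  unfolding rel_def using lc by metis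

lemma rel_sym: "rel u v \<Longrightarrow> rel v u"
  unfolding rel_def by metis

lemma rel_trans: assumes "rel u v" "rel v w" shows "rel u w"
  unfolding rel_def
proof (intro allI impI)
  fix x y assume h: "snd u * x = snd w * y"
  obtain p q where pq: "snd u * x * p = snd v * q" using ore by blast
  have 1: "fst u * (x * p) = fst v * q" using assms(1) pq unfolding rel_def by (simp add: mult.assoc)
  have "snd v * q = snd w * (y * p)" using pq h by (metis mult.assoc)
  hence 2: "fst v * q = fst w * (y * p)" using assms(2) unfolding rel_def by blast
  have "fst u * x * p = fst w * y * p" using 1 2 by (simp add: mult.assoc)
  thus "fst u * x = fst w * y" using rc by blast
qed

definition mul :: "'a \<times> 'a \<Rightarrow> 'a \<times> 'a \<Rightarrow> 'a \<times> 'a" where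
  "mul u v = (let pq = (SOME pq. snd u * fst pq = fst v * snd pq) in (fst u * fst pq, snd v * snd pq))"

lemma mul_spec: "\<exists>p q. snd u * p = fst v * q \<and> mul u v = (fst u * p, snd v * q)"
proof -
  have "\<exists>pq. snd u * fst pq = fst v * snd pq" using ore by force
  hence "snd u * fst (SOME pq. snd u * fst pq = fst v * snd pq) = fst v * snd (SOME pq. snd u * fst pq = fst v * snd pq)"
    by (rule someI_ex)
  thus ?thesis unfolding mul_def Let_def by blast
qed

lemma mul_rel:
  assumes "snd u * p = fst v * q" "snd u' * p' = fst v' * q'" "rel u u'" "rel v v'"
  shows "rel (fst u * p, snd v * q) (fst u' * p', snd v' * q')"
  unfolding rel_def
proof (intro allI impI)
  fix x y assume h: "snd (fst u * p, snd v * q) * x = snd (fst u' * p', snd v' * q') * y"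
  hence "snd v * (q * x) = snd v' * (q' * y)" by (simp add: mult.assoc)
  hence "fst v * (q * x) = fst v' * (q' * y)" using assms(4) unfolding rel_def by blast
  hence "snd u * (p * x) = snd u' * (p' * y)" using assms(1,2) by (metis mult.assoc)
  hence "fst u * (p * x) = fst u' * (p' * y)" using assms(3) unfolding rel_def by blast
  thus "fst (fst u * p, snd v * q) * x = fst (fst u' * p', snd v' * q') * y" by (simp add: mult.assoc)
qed

lemma mul_cong: "rel u u' \<Longrightarrow> rel v v' \<Longrightarrow> rel (mul u v) (mul u' v')"
  using mul_spec[of u v] mul_spec[of u' v'] mul_rel by metis

lemma mul_assoc: "rel (mul (mul u v) w) (mul u (mul v w))"
proof -
  obtain p q where pq: "snd u * p = fst v * q" "mul u v = (fst u * p, snd v * q)" using mul_spec by blast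
  obtain r s where rs: "snd v * q * r = fst w * s" "mul (mul u v) w = (fst u * p * r, snd w * s)"
    using mul_spec[of "mul u v" w] pq(2) by auto
  obtain p' q' where pq': "snd v * p' = fst w * q'" "mul v w = (fst v * p', snd w * q')" using mul_spec by blast
  obtain r' s' where rs': "snd u * r' = fst v * p' * s'" "mul u (mul v w) = (fst u * r', snd w * q' * s')"
    using mul_spec[of u "mul v w"] pq'(2) by auto
  show ?thesis unfolding rel_def rs(2) rs'(2) fst_conv snd_conv
  proof (intro allI impI)
    fix x y assume "snd w * s * x = snd w * q' * s' * y"
    hence "s * x = q' * s' * y" using lc by (simp add: mult.assoc)
    hence "fst w * s * x = fst w * q' * s' * y" by (simp add: mult.assoc)
    hence "snd v * (q * r * x) = snd v * (p' * s' * y)" using rs(1) pq'(1) by (metis mult.assoc)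
    hence "q * r * x = p' * s' * y" using lc by blast
    hence "fst v * q * r * x = fst v * p' * s' * y" by (simp add: mult.assoc)
    hence "snd u * (p * r * x) = snd u * (r' * y)" using pq(1) rs'(1) by (metis mult.assoc)
    hence "p * r * x = r' * y" using lc by blast
    thus "fst u * p * r * x = fst u * r' * y" by (simp add: mult.assoc)
  qed
qed

definition e :: 'a where "e = undefined"

lemma mul_one: "rel (mul (e, e) u) u"
proof -
  obtain p q where pq: "e * p = fst u * q" "mul (e,e) u = (e * p, snd u * q)" using mul_spec[of "(e,e)" u] by auto
  show ?thesis unfolding rel_def pq(2) fst_conv snd_conv
  proof (intro allI impI)
    fix x y assume "snd u * q * x = snd u * y"
    hence "q * x = y" using lc by (simp add: mult.assoc)
    thus "e * p * x = fst u * y" using pq(1) by (simp add: mult.assoc)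
  qed
qed

lemma mul_inv: "rel (mul (snd u, fst u) u) (e, e)"
proof -
  obtain p q where pq: "fst u * p = fst u * q" "mul (snd u, fst u) u = (snd u * p, snd u * q)" using mul_spec[of "(snd u, fst u)" u] by auto
  have "p = q" using pq(1) lc by blast
  thus ?thesis unfolding rel_def pq(2) by simp
qed

lemma mul_emb: "rel (mul (x * e, e) (y * e, e)) (x * y * e, e)"
proof -
  obtain p q where pq: "e * p = y * e * q" "mul (x * e, e) (y * e, e) = (x * e * p, e * q)" using mul_spec[of "(x*e, e)" "(y*e,e)"] by auto
  show ?thesis unfolding rel_def pq(2) fst_conv snd_conv
  proof (intro allI impI)
    fix s t assume "e * q * s = e * t"
    hence "q * s = t" using lc by (simp add: mult.assoc)
    thus "x * e * p * s = x * y * e * t" using pq(1) by (metis mult.assoc)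
  qed
qed

lemma emb_inj: assumes "rel (x * e, e) (y * e, e)" shows "x = y"
proof -
  have "x * e * e = y * e * e" using assms unfolding rel_def by simp
  thus ?thesis using rc by blast
qed

definition cls where "cls u = {v. rel u v}"
definition code :: "'a \<times> 'a \<Rightarrow> nat" where "code u = to_nat_on (range cls) (cls u)"

lemma cnt2: "countable (range cls)"
  using cnt by (intro countable_image) (metis countable_SIGMA UNIV_Times_UNIV)

lemma code_eq: "code u = code v \<longleftrightarrow> rel u v"
proof -
  have "code u = code v \<longleftrightarrow> cls u = cls v" unfolding code_def using cnt2 by (simp add: inj_on_eq_iff[OF inj_on_to_nat_on])
  also have "\<dots> \<longleftrightarrow> rel u v" unfolding cls_def
    by (metis (mono_tags, lifting) mem_Collect_eq rel_refl rel_sym rel_trans subsetI subset_antisym)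
  finally show ?thesis .
qed

definition rp :: "nat \<Rightarrow> 'a \<times> 'a" where "rp n = (SOME u. code u = n)"

lemma rp_code: "rel (rp (code u)) u"
proof -
  have "code (rp (code u)) = code u" unfolding rp_def by (rule someI_ex) blast
  thus ?thesis using code_eq by blast
qed

definition GG :: "nat monoid" where
  "GG = \<lparr>carrier = range code, mult = (\<lambda>n m. code (mul (rp n) (rp m))), one = code (e, e)\<rparr>"

lemma GG_mult: "code u \<otimes>\<^bsub>GG\<^esub> code v = code (mul u v)"
  unfolding GG_def by (simp add: code_eq mul_cong rp_code)

lemma group_GG: "group GG"
proof (rule groupI)
  fix x y assume "x \<in> carrier GG" "y \<in> carrier GG"
  thus "x \<otimes>\<^bsub>GG\<^esub> y \<in> carrier GG" unfolding GG_def by auto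
next
  show "\<one>\<^bsub>GG\<^esub> \<in> carrier GG" unfolding GG_def by auto
next
  fix x y z assume "x \<in> carrier GG" "y \<in> carrier GG" "z \<in> carrier GG"
  then obtain u v w where "x = code u" "y = code v" "z = code w" unfolding GG_def by auto
  thus "x \<otimes>\<^bsub>GG\<^esub> y \<otimes>\<^bsub>GG\<^esub> z = x \<otimes>\<^bsub>GG\<^esub> (y \<otimes>\<^bsub>GG\<^esub> z)"
    by (simp add: GG_mult code_eq mul_assoc)
next
  fix x assume "x \<in> carrier GG"
  then obtain u where "x = code u" unfolding GG_def by auto
  moreover have "\<one>\<^bsub>GG\<^esub> = code (e,e)" unfolding GG_def by simp
  ultimately show "\<one>\<^bsub>GG\<^esub> \<otimes>\<^bsub>GG\<^esub> x = x" by (simp add: GG_mult code_eq mul_one)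
next
  fix x assume "x \<in> carrier GG"
  then obtain u where "x = code u" unfolding GG_def by auto
  moreover have "\<one>\<^bsub>GG\<^esub> = code (e,e)" unfolding GG_def by simp
  ultimately show "\<exists>y\<in>carrier GG. y \<otimes>\<^bsub>GG\<^esub> x = \<one>\<^bsub>GG\<^esub>"
  proof (intro bexI[of _ "code (snd u, fst u)"])
    show "code (snd u, fst u) \<otimes>\<^bsub>GG\<^esub> x = \<one>\<^bsub>GG\<^esub>" using \<open>x = code u\<close> \<open>\<one>\<^bsub>GG\<^esub> = code (e,e)\<close>
      by (simp only: GG_mult code_eq mul_inv)
    show "code (snd u, fst u) \<in> carrier GG" unfolding GG_def by simp
  qed
qed

lemma embeds: "embeds_in_group TYPE('a)"
  unfolding embeds_in_group_def
proof (intro exI conjI allI)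
  show "group GG" by (rule group_GG)
  show "inj (\<lambda>x. code (x * e, e))" by (rule injI) (simp add: code_eq emb_inj)
  show "range (\<lambda>x. code (x * e, e)) \<subseteq> carrier GG" unfolding GG_def by auto
  fix x y show "code (x * y * e, e) = code (x * e, e) \<otimes>\<^bsub>GG\<^esub> code (y * e, e)"
    by (simp add: GG_mult code_eq mul_emb rel_sym)
qed

end


fun prodl :: "'a::semigroup_mult list \<Rightarrow> 'a" where
  "prodl [] = undefined"
| "prodl (x # xs) = foldl (*) x xs"

lemma foldl_mult: "foldl (*) (u * v) ys = u * foldl (*) v (ys :: 'a::semigroup_mult list)"
  by (induction ys arbitrary: v) (simp_all add: mult.assoc)

lemma prodl_append: "xs \<noteq> [] \<Longrightarrow> ys \<noteq> [] \<Longrightarrow> prodl (xs @ ys) = prodl xs * prodl (ys :: 'a::semigroup_mult list)"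
  by (cases xs; cases ys) (simp_all add: foldl_mult)

lemma gen_words: "s \<in> generated A \<Longrightarrow> \<exists>xs. xs \<noteq> [] \<and> set xs \<subseteq> A \<and> prodl xs = s"
proof (induction rule: generated.induct)
  case (gen_base a) thus ?case by (intro exI[of _ "[a]"]) simp
next
  case (gen_step x a)
  then obtain xs where xs: "xs \<noteq> []" "set xs \<subseteq> A" "prodl xs = x" by blast
  thus ?case using gen_step by (intro exI[of _ "xs @ [a]"]) (simp add: prodl_append)
qed

lemma gen_countable: assumes "finite A" "generated A = (UNIV :: 'a::semigroup_mult set)"
  shows "countable (UNIV :: 'a set)"
proof -
  have "UNIV \<subseteq> prodl ` lists A" using gen_words assms(2) by (metis image_iff in_listsI subsetD subsetI UNIV_I)
  moreover have "countable (prodl ` lists A)" using assms(1) by (simp add: countable_finite)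
  ultimately show ?thesis using countable_subset by blast
qed

fun walk :: "(nat \<Rightarrow> 'a::semigroup_mult) \<Rightarrow> 'a \<Rightarrow> nat \<Rightarrow> 'a" where
  "walk g x0 0 = x0"
| "walk g x0 (Suc n) = walk g x0 n * g n"

lemma walk_seg: "walk g x0 (n + Suc j) = walk g x0 n * prodl (map g [n..<n + Suc j])"
proof (induction j)
  case 0 thus ?case by simp
next
  case (Suc j)
  have "[n..<n + Suc (Suc j)] = [n..<n + Suc j] @ [n + Suc j]" by simp
  hence "prodl (map g [n..<n + Suc (Suc j)]) = prodl (map g [n..<n + Suc j]) * g (n + Suc j)"
    using prodl_append[of "map g [n..<n + Suc j]" "[g (n + Suc j)]"] by simp
  thus ?case using Suc by (simp add: mult.assoc)
qed

lemma walk_ex: "n < m \<Longrightarrow> \<exists>t. walk g x0 m = walk g x0 n * t"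
  using walk_seg[of g x0 n "m - n - 1"] by (metis Suc_diff_Suc add_diff_inverse_nat diff_Suc_1 not_less_iff_gr_or_eq)

definition R :: "'a::semigroup_mult \<Rightarrow> 'a set" where "R z = insert z (range ((*) z))"

lemma R_mult: "y \<in> R z \<Longrightarrow> y * g \<in> R z"
  unfolding R_def by (auto simp: mult.assoc)

lemma walk_R: "n \<le> m \<Longrightarrow> walk g x0 m \<in> R (walk g x0 n)"
proof (induction m)
  case 0 thus ?case by (simp add: R_def)
next
  case (Suc m)
  show ?case
  proof (cases "n = Suc m")
    case True thus ?thesis by (simp add: R_def)
  next
    case False thus ?thesis using Suc R_mult by simp
  qed
qed

lemma path_R:
  assumes "is_path (right_cayley A) P" "hd P \<in> R z"
  shows "set P \<subseteq> R z"
proof -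
  have "\<forall>i. i < length P \<longrightarrow> P ! i \<in> R z"
  proof (intro allI)
    fix i show "i < length P \<longrightarrow> P ! i \<in> R z"
    proof (induction i)
      case 0 thus ?case using assms by (simp add: hd_conv_nth is_path_def)
    next
      case (Suc i)
      { assume "Suc i < length P"
        hence "(P ! i, P ! Suc i) \<in> right_cayley A" using assms(1) unfolding is_path_def by blast
        then obtain g where "P ! Suc i = P ! i * g" unfolding right_cayley_def by blast
        hence "P ! Suc i \<in> R z" using Suc \<open>Suc i < length P\<close> R_mult by simp }
      thus ?case by blast
    qed
  qed
  thus ?thesis by (metis in_set_conv_nth subsetI)
qed

section \<open>Loop erasure\<close>

definition lastocc :: "(nat \<Rightarrow> 'a) \<Rightarrow> nat \<Rightarrow> nat" where
  "lastocc w k = Max {m. w m = w k}"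

fun idx :: "(nat \<Rightarrow> 'a) \<Rightarrow> nat \<Rightarrow> nat" where
  "idx w 0 = lastocc w 0"
| "idx w (Suc i) = lastocc w (Suc (idx w i))"

lemma erase_ray:
  assumes fin: "\<And>n. finite {m. w m = w n}" and edge: "\<And>n. (w n, w (Suc n)) \<in> \<Gamma>"
  shows "is_ray \<Gamma> (w \<circ> idx w)" "range (w \<circ> idx w) \<subseteq> range w"
proof -
  have lo1: "w (lastocc w k) = w k" for k
    unfolding lastocc_def using Max_in[OF fin[of k]] by auto
  have lo2: "k \<le> lastocc w k" for k
    unfolding lastocc_def using Max_ge[OF fin[of k]] by auto
  have lo3: "w m \<noteq> w k" if "m > lastocc w k" for m k
    using that Max_ge[OF fin[of k], of m] unfolding lastocc_def by auto
  have sm: "strict_mono (idx w)"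
    by (rule strict_mono_Suc_iff[THEN iffD2]) (simp add: Suc_le_lessD lo2)
  have ex: "\<exists>k. idx w i = lastocc w k" for i by (cases i) auto
  have "inj (w \<circ> idx w)"
  proof (rule injI)
    fix i j assume h: "(w \<circ> idx w) i = (w \<circ> idx w) j"
    show "i = j"
    proof (rule ccontr)
      assume "i \<noteq> j"
      then consider "i < j" | "j < i" by linarith
      thus False
      proof cases
        case 1
        obtain k where k: "idx w i = lastocc w k" using ex by blast
        have "idx w j > lastocc w k" using sm 1 k by (metis strict_mono_less)
        hence "w (idx w j) \<noteq> w k" by (rule lo3)
        thus False using h k lo1 by simp
      next
        case 2
        obtain k where k: "idx w j = lastocc w k" using ex by blast
        have "idx w i > lastocc w k" using sm 2 k by (metis strict_mono_less)
        hence "w (idx w i) \<noteq> w k" by (rule lo3)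
        thus False using h k lo1 by simp
      qed
    qed
  qed
  moreover have "((w \<circ> idx w) i, (w \<circ> idx w) (Suc i)) \<in> \<Gamma>" for i
    using edge[of "idx w i"] lo1[of "Suc (idx w i)"] by simp
  ultimately show "is_ray \<Gamma> (w \<circ> idx w)" unfolding is_ray_def by blast
  show "range (w \<circ> idx w) \<subseteq> range w" by auto
qed



locale sep =
  fixes A :: "'a::semigroup_mult set" and a b :: 'a
  assumes lc: "\<And>(c::'a) x y. c * x = c * y \<Longrightarrow> x = y"
    and rc: "\<And>(c::'a) x y. x * c = y * c \<Longrightarrow> x = y"
    and finA: "finite A" and genA: "generated A = UNIV"
    and disj: "\<And>x y. a * x \<noteq> b * y"
begin

definition Wa where "Wa = (SOME xs. xs \<noteq> [] \<and> set xs \<subseteq> A \<and> prodl xs = a)"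
definition Wb where "Wb = (SOME xs. xs \<noteq> [] \<and> set xs \<subseteq> A \<and> prodl xs = b)"

lemma Wa: "Wa \<noteq> [] \<and> set Wa \<subseteq> A \<and> prodl Wa = a"
  unfolding Wa_def by (rule someI_ex) (use gen_words genA in blast)
lemma Wb: "Wb \<noteq> [] \<and> set Wb \<subseteq> A \<and> prodl Wb = b"
  unfolding Wb_def by (rule someI_ex) (use gen_words genA in blast)

definition L where "L = length Wa + length Wb"

lemma L_pos: "length Wa < L" "length Wb < L" "0 < length Wa" "0 < length Wb"
  using Wa Wb unfolding L_def by auto

definition blk :: "(nat \<Rightarrow> bool) \<Rightarrow> nat \<Rightarrow> 'a list" where
  "blk \<sigma> k = (if \<sigma> k then Wa @ Wb else Wb @ Wa)"

definition gs :: "(nat \<Rightarrow> bool) \<Rightarrow> nat \<Rightarrow> 'a" where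
  "gs \<sigma> n = blk \<sigma> (n div L) ! (n mod L)"

abbreviation W where "W \<sigma> \<equiv> walk (gs \<sigma>) a"

lemma len_blk: "length (blk \<sigma> k) = L"
  unfolding blk_def L_def by simp

lemma gs_A: "gs \<sigma> n \<in> A"
proof -
  have "n mod L < L" using L_pos by simp
  hence "gs \<sigma> n \<in> set (blk \<sigma> (n div L))" unfolding gs_def using len_blk by (metis nth_mem)
  moreover have "set (blk \<sigma> k) \<subseteq> A" for k using Wa Wb unfolding blk_def by auto
  ultimately show ?thesis by blast
qed

lemma W_edge: "(W \<sigma> n, W \<sigma> (Suc n)) \<in> right_cayley A"
  unfolding right_cayley_def using gs_A by auto

lemma map_gs: assumes "j \<le> L" shows "map (gs \<sigma>) [k * L..<k * L + j] = take j (blk \<sigma> k)"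
proof (rule nth_equalityI)
  show "length (map (gs \<sigma>) [k * L..<k * L + j]) = length (take j (blk \<sigma> k))"
    using assms len_blk by simp
  fix i assume "i < length (map (gs \<sigma>) [k * L..<k * L + j])"
  hence i: "i < j" by simp
  hence iL: "i < L" using assms by simp
  have "(k * L + i) div L = k" "(k * L + i) mod L = i" using iL by auto
  thus "map (gs \<sigma>) [k * L..<k * L + j] ! i = take j (blk \<sigma> k) ! i"
    using i unfolding gs_def by (simp add: add.commute)
qed

definition cc :: "(nat \<Rightarrow> bool) \<Rightarrow> nat \<Rightarrow> 'a" where "cc \<sigma> k = (if \<sigma> k then a else b)"
definition lc' :: "(nat \<Rightarrow> bool) \<Rightarrow> nat \<Rightarrow> nat" where "lc' \<sigma> k = (if \<sigma> k then length Wa else length Wb)"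

lemma lc'_bounds: "0 < lc' \<sigma> k" "lc' \<sigma> k < L"
  using L_pos unfolding lc'_def by auto

lemma block_step: "W \<sigma> (k * L + lc' \<sigma> k) = W \<sigma> (k * L) * cc \<sigma> k"
proof -
  obtain j where j: "lc' \<sigma> k = Suc j" using lc'_bounds by (metis gr0_implies_Suc)
  have "W \<sigma> (k * L + Suc j) = W \<sigma> (k * L) * prodl (map (gs \<sigma>) [k * L..<k * L + Suc j])"
    by (rule walk_seg)
  also have "map (gs \<sigma>) [k * L..<k * L + Suc j] = take (lc' \<sigma> k) (blk \<sigma> k)"
    using map_gs lc'_bounds j by (metis less_imp_le)
  also have "prodl \<dots> = cc \<sigma> k" unfolding blk_def lc'_def cc_def using Wa Wb by auto
  finally show ?thesis using j by simp
qed

lemma ident: fixes x u z :: 'a assumes "x * u = x" shows "u * z = z" "z * u = z"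
proof -
  have uz: "u * z' = z'" for z'
  proof -
    have "x * (u * z') = x * u * z'" by (simp add: mult.assoc)
    also have "\<dots> = x * z'" using assms by simp
    finally show ?thesis by (rule lc)
  qed
  thus "u * z = z" .
  have "u * u = u" by (rule uz)
  hence "z * u * u = z * u" by (metis mult.assoc)
  thus "z * u = z" using rc by blast
qed

lemma repeat_bound: assumes "W \<sigma> i = W \<sigma> j" "i < j" shows "j < i + 2 * L"
proof (rule ccontr)
  assume "\<not> j < i + 2 * L"
  define k where "k = i div L + 1"
  define B where "B = k * L"
  have L0: "0 < L" using L_pos by simp
  have d1: "i div L * L \<le> i" by (rule div_times_less_eq_dividend)
  have d2: "i div L * L + i mod L = i" by (rule div_mult_mod_eq)
  have d3: "i mod L < L" using L0 by simp
  have "B = i div L * L + L" by (simp add: B_def k_def)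
  hence "i < B" "B \<le> i + L" using d1 d2 d3 by linarith+
  hence "i < B" "B + lc' \<sigma> k < j" using lc'_bounds[of \<sigma> k] \<open>\<not> j < i + 2 * L\<close> by auto
  obtain t1 where t1: "W \<sigma> B = W \<sigma> i * t1" using walk_ex \<open>i < B\<close> by blast
  obtain t2 where t2: "W \<sigma> j = W \<sigma> (B + lc' \<sigma> k) * t2" using walk_ex \<open>B + lc' \<sigma> k < j\<close> by blast
  have bs: "W \<sigma> (B + lc' \<sigma> k) = W \<sigma> B * cc \<sigma> k" unfolding B_def by (rule block_step)
  define c where "c = cc \<sigma> k"
  have "W \<sigma> i = W \<sigma> (B + lc' \<sigma> k) * t2" using t2 assms(1) by simp
  also have "\<dots> = W \<sigma> B * c * t2" using bs c_def by simp
  also have "\<dots> = W \<sigma> i * (t1 * c * t2)" using t1 by (simp add: mult.assoc)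
  finally have e: "W \<sigma> i * (t1 * c * t2) = W \<sigma> i" by simp
  define e where "e = t1 * c * t2"
  have "t1 * (c * t2 * t1) = t1 * e"
    using ident(1)[OF e, of t1] ident(2)[OF e, of t1] e_def by (simp add: mult.assoc)
  hence "c * t2 * t1 = e" by (rule lc)
  hence ct: "c * (t2 * t1) = e" by (simp add: mult.assoc)
  have ce: "c * (t2 * t1 * y) = e * y" for y using ct by (metis mult.assoc)
  show False
  proof (cases "\<sigma> k")
    case True
    hence "a * (t2 * t1 * b) = b * e" using ce[of b] ident[OF e] e_def c_def cc_def by simp
    thus False using disj by blast
  next
    case False
    hence "b * (t2 * t1 * a) = a * e" using ce[of a] ident[OF e] e_def c_def cc_def by simp
    thus False using disj by metis
  qed
qed

lemma W_fin: "finite {m. W \<sigma> m = W \<sigma> n}"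
proof -
  have "{m. W \<sigma> m = W \<sigma> n} \<subseteq> {..<n + 2 * L}"
  proof
    fix m assume "m \<in> {m. W \<sigma> m = W \<sigma> n}"
    thus "m \<in> {..<n + 2 * L}" using repeat_bound[of \<sigma> n m] L_pos by (cases "n < m") auto
  qed
  thus ?thesis using finite_subset by blast
qed

definition ray where "ray \<sigma> = W \<sigma> \<circ> idx (W \<sigma>)"

lemma ray: "is_ray (right_cayley A) (ray \<sigma>)" "range (ray \<sigma>) \<subseteq> range (W \<sigma>)"
  unfolding ray_def using erase_ray[OF W_fin W_edge] by auto

end


context sep begin

lemma agree: assumes "\<forall>i<k. \<sigma> i = \<tau> i" shows "n \<le> k * L \<Longrightarrow> W \<sigma> n = W \<tau> n"
proof (induction n)
  case 0 thus ?case by simp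
next
  case (Suc n)
  hence "n div L < k" using less_mult_imp_div_less by (metis Suc_le_lessD)
  hence "gs \<sigma> n = gs \<tau> n" unfolding gs_def blk_def using assms by simp
  thus ?case using Suc by simp
qed

lemma R_disj: "R (p * a) \<inter> R (p * b) = {}"
proof (rule ccontr)
  assume "R (p * a) \<inter> R (p * b) \<noteq> {}"
  then obtain y where y: "y \<in> R (p * a)" "y \<in> R (p * b)" by blast
  have "\<exists>s. y * q = p * c * s" if "y \<in> R (p * c)" for c q
    using that unfolding R_def by (auto simp: mult.assoc)
  then obtain s t where "y * a = p * a * s" "y * a = p * b * t" using y by metis
  hence "p * (a * s) = p * (b * t)" by (simp add: mult.assoc)
  hence "a * s = b * t" by (rule lc)
  thus False using disj by blast
qed

lemma tail: "range (ray \<sigma>) \<subseteq> W \<sigma> ` {..<N} \<union> R (W \<sigma> N)"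
proof -
  have "range (W \<sigma>) \<subseteq> W \<sigma> ` {..<N} \<union> R (W \<sigma> N)"
  proof
    fix y assume "y \<in> range (W \<sigma>)"
    then obtain m where m: "y = W \<sigma> m" by blast
    show "y \<in> W \<sigma> ` {..<N} \<union> R (W \<sigma> N)"
    proof (cases "m < N")
      case True thus ?thesis using m by blast
    next
      case False hence "y \<in> R (W \<sigma> N)" using m walk_R[of N m] by simp
      thus ?thesis by blast
    qed
  qed
  thus ?thesis using ray(2) by blast
qed

lemma separate: assumes "\<sigma> \<noteq> \<tau>"
  shows "\<not> reaches (right_cayley A) (range (ray \<tau>)) (range (ray \<sigma>))"
proof
  assume "reaches (right_cayley A) (range (ray \<tau>)) (range (ray \<sigma>))"
  then obtain P :: "nat \<Rightarrow> 'a list" where PP: "(\<forall>n. is_path (right_cayley A) (P n) \<and> hd (P n) \<in> range (ray \<tau>) \<and> last (P n) \<in> range (ray \<sigma>)) \<and>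
    (\<forall>n m. n \<noteq> m \<longrightarrow> set (P n) \<inter> set (P m) = {})" unfolding reaches_def by (elim exE) (rule that, assumption)
  have P: "is_path (right_cayley A) (P n) \<and> hd (P n) \<in> range (ray \<tau>) \<and> last (P n) \<in> range (ray \<sigma>)" for n
    using PP[THEN conjunct1] by (rule spec)
  have Pd: "set (P n) \<inter> set (P m) = {}" if "n \<noteq> m" for n m
    by (rule mp[OF spec[OF spec[OF PP[THEN conjunct2]]]]) (rule that)
  have "\<exists>k. \<sigma> k \<noteq> \<tau> k" using assms by blast
  define k where "k = (LEAST k. \<sigma> k \<noteq> \<tau> k)"
  have k1: "\<sigma> k \<noteq> \<tau> k" unfolding k_def by (rule LeastI_ex) fact
  have k2: "\<forall>i<k. \<sigma> i = \<tau> i" unfolding k_def using not_less_Least by blast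
  define p where "p = W \<sigma> (k * L)"
  have p2: "W \<tau> (k * L) = p" unfolding p_def using agree[OF k2] by simp
  define Ns where "Ns = k * L + lc' \<sigma> k"
  define Nt where "Nt = k * L + lc' \<tau> k"
  have Ns: "W \<sigma> Ns = p * cc \<sigma> k" unfolding Ns_def p_def by (rule block_step)
  have Nt: "W \<tau> Nt = p * cc \<tau> k" unfolding Nt_def using block_step p2 by metis
  have dj: "R (W \<sigma> Ns) \<inter> R (W \<tau> Nt) = {}"
  proof (cases "\<sigma> k")
    case True
    hence "\<not> \<tau> k" using k1 by simp
    thus ?thesis unfolding Ns Nt cc_def using True R_disj[of p] by simp
  next
    case False
    hence "\<tau> k" using k1 by simp
    hence "R (W \<sigma> Ns) \<inter> R (W \<tau> Nt) = R (p * b) \<inter> R (p * a)" unfolding Ns Nt cc_def using False by simp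
    also have "\<dots> = {}" using R_disj[of p] by blast
    finally show ?thesis .
  qed
  define Fs where "Fs = W \<sigma> ` {..<Ns}"
  define Ft where "Ft = W \<tau> ` {..<Nt}"
  have ts: "range (ray \<sigma>) \<subseteq> Fs \<union> R (W \<sigma> Ns)" unfolding Fs_def by (rule tail)
  have tt: "range (ray \<tau>) \<subseteq> Ft \<union> R (W \<tau> Nt)" unfolding Ft_def by (rule tail)
  have Pn: "is_path (right_cayley A) (P n)" "hd (P n) \<in> range (ray \<tau>)" "last (P n) \<in> range (ray \<sigma>)" for n
    using P by auto
  have ne: "P n \<noteq> []" for n using Pn(1) unfolding is_path_def by blast
  define \<phi> where "\<phi> n = (if hd (P n) \<in> Ft then hd (P n) else last (P n))" for n
  have phi: "\<phi> n \<in> Ft \<union> Fs \<and> \<phi> n \<in> set (P n)" for n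
  proof (cases "hd (P n) \<in> Ft")
    case True
    thus ?thesis using ne[of n] unfolding \<phi>_def by simp
  next
    case False
    have "hd (P n) \<in> Ft \<union> R (W \<tau> Nt)" using Pn(2)[of n] tt by (rule subsetD[rotated])
    hence "hd (P n) \<in> R (W \<tau> Nt)" using False by simp
    hence "set (P n) \<subseteq> R (W \<tau> Nt)" using Pn(1) path_R by blast
    hence l1: "last (P n) \<in> R (W \<tau> Nt)" using ne[of n] by auto
    have "last (P n) \<in> Fs \<union> R (W \<sigma> Ns)" using Pn(3)[of n] ts by (rule subsetD[rotated])
    hence "last (P n) \<in> Fs" using l1 dj by blast
    thus ?thesis using False ne[of n] unfolding \<phi>_def by simp
  qed
  have "inj \<phi>"
  proof (rule injI)
    fix n m assume h: "\<phi> n = \<phi> m"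
    show "n = m"
    proof (rule ccontr)
      assume "n \<noteq> m"
      hence "set (P n) \<inter> set (P m) = {}" by (rule Pd)
      moreover have "\<phi> n \<in> set (P n)" "\<phi> n \<in> set (P m)" using phi[of n] phi[of m] h by auto
      ultimately show False by blast
    qed
  qed
  moreover have "finite (range \<phi>)"
  proof (rule finite_subset)
    show "range \<phi> \<subseteq> Ft \<union> Fs" using phi by blast
    show "finite (Ft \<union> Fs)" unfolding Fs_def Ft_def by simp
  qed
  ultimately show False using finite_imageD by blast
qed

definition EE where "EE \<sigma> = end_equiv (right_cayley A) `` {ray \<sigma>}"

lemma ray_in: "ray \<sigma> \<in> rays_antirays (right_cayley A)"
  unfolding rays_antirays_def using ray(1) by blast

lemma ray_refl: "(ray \<sigma>, ray \<sigma>) \<in> end_equiv (right_cayley A)"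
proof -
  have "reaches (right_cayley A) (range (ray \<sigma>)) (range (ray \<sigma>))"
    unfolding reaches_def
  proof (intro exI[of _ "\<lambda>n. [ray \<sigma> n]"] conjI allI impI)
    fix n show "is_path (right_cayley A) [ray \<sigma> n]" unfolding is_path_def by simp
    show "hd [ray \<sigma> n] \<in> range (ray \<sigma>)" "last [ray \<sigma> n] \<in> range (ray \<sigma>)" by auto
  next
    fix n m :: nat assume "n \<noteq> m"
    thus "set [ray \<sigma> n] \<inter> set [ray \<sigma> m] = {}" using ray(1) unfolding is_ray_def by (auto dest: injD)
  qed
  thus ?thesis unfolding end_equiv_def using ray_in by blast
qed

lemma EE_in: "EE \<sigma> \<in> ends (right_cayley A)"
  unfolding EE_def ends_def using ray_in by (rule quotientI)

lemma EE_inj: "EE \<sigma> = EE \<tau> \<Longrightarrow> \<sigma> = \<tau>"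
proof (rule ccontr)
  assume h: "EE \<sigma> = EE \<tau>" "\<sigma> \<noteq> \<tau>"
  have "ray \<sigma> \<in> EE \<sigma>" unfolding EE_def using ray_refl by blast
  hence "(ray \<tau>, ray \<sigma>) \<in> end_equiv (right_cayley A)" using h unfolding EE_def by blast
  hence "reaches (right_cayley A) (range (ray \<tau>)) (range (ray \<sigma>))" unfolding end_equiv_def by blast
  thus False using separate h(2) by blast
qed

lemma lower: "(UNIV :: nat set set) \<lesssim> ends (right_cayley A)"
  unfolding lepoll_def
proof (intro exI[of _ "\<lambda>X. EE (\<lambda>n. n \<in> X)"] conjI)
  show "inj_on (\<lambda>X. EE (\<lambda>n. n \<in> X)) UNIV"
  proof (rule inj_onI)
    fix X Y :: "nat set" assume "EE (\<lambda>n. n \<in> X) = EE (\<lambda>n. n \<in> Y)"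
    hence "(\<lambda>n. n \<in> X) = (\<lambda>n. n \<in> Y)" by (rule EE_inj)
    thus "X = Y" by (metis Collect_mem_eq)
  qed
  show "range (\<lambda>X. EE (\<lambda>n. n \<in> X)) \<subseteq> ends (right_cayley A)" using EE_in by blast
qed

end

lemma upper:
  fixes \<Gamma> :: "'a digraph"
  assumes cnt: "countable (UNIV :: 'a set)"
  shows "ends \<Gamma> \<lesssim> (UNIV :: nat set set)"
proof -
  define f where "f C = (SOME r. r \<in> rays_antirays \<Gamma> \<and> C = end_equiv \<Gamma> `` {r})" for C
  have f: "f C \<in> rays_antirays \<Gamma> \<and> C = end_equiv \<Gamma> `` {f C}" if "C \<in> ends \<Gamma>" for C
  proof -
    have "\<exists>r. r \<in> rays_antirays \<Gamma> \<and> C = end_equiv \<Gamma> `` {r}" using that unfolding ends_def quotient_def by blast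
    thus ?thesis unfolding f_def by (rule someI_ex)
  qed
  have "inj_on f (ends \<Gamma>)" by (rule inj_onI) (metis f)
  define enc where "enc = to_nat_on (UNIV :: 'a set)"
  have enc: "inj enc" unfolding enc_def by (rule inj_on_to_nat_on[OF cnt])
  define g where "g r = (\<lambda>n. prod_encode (n, enc (r n))) ` UNIV" for r :: "nat \<Rightarrow> 'a"
  have "inj g"
  proof (rule injI)
    fix r s assume h: "g r = g s"
    show "r = s"
    proof
      fix n
      have "prod_encode (n, enc (r n)) \<in> g s" using h unfolding g_def by blast
      then obtain m where "prod_encode (n, enc (r n)) = prod_encode (m, enc (s m))" unfolding g_def by blast
      hence "n = m \<and> enc (r n) = enc (s m)" using prod_encode_eq by blast
      thus "r n = s n" using enc by (auto dest: injD)
    qed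
  qed
  hence "inj_on (g \<circ> f) (ends \<Gamma>)" using \<open>inj_on f (ends \<Gamma>)\<close> by (simp add: comp_inj_on inj_on_subset)
  thus ?thesis unfolding lepoll_def by blast
qed


theorem mainTheorem14:
  fixes A :: "'a::semigroup_mult set"
  assumes "cancellative TYPE('a)"
    and "finite A" and "generated A = UNIV"
    and "\<not> embeds_in_group TYPE('a)"
  shows "ends (right_cayley A) \<approx> (UNIV :: nat set set)"
proof -
  have lc: "\<And>(c::'a) x y. c * x = c * y \<Longrightarrow> x = y" and rc: "\<And>(c::'a) x y. x * c = y * c \<Longrightarrow> x = y"
    using assms(1) unfolding cancellative_def by blast+
  have cnt: "countable (UNIV :: 'a set)" using gen_countable assms(2,3) by blast
  have "\<exists>a b::'a. \<forall>x y. a * x \<noteq> b * y"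
  proof (rule ccontr)
    assume "\<not> (\<exists>a b::'a. \<forall>x y. a * x \<noteq> b * y)"
    hence o: "\<And>a b::'a. \<exists>x y. a * x = b * y" by blast
    interpret ore "TYPE('a)" using lc rc o cnt by unfold_locales
    have "embeds_in_group TYPE('a)" by (rule embeds)
    thus False using assms(4) by blast
  qed
  then obtain a b :: 'a where d: "\<And>x y. a * x \<noteq> b * y" by blast
  interpret sep A a b using lc rc assms(2,3) d by unfold_locales
  show ?thesis by (rule lepoll_antisym[OF upper[OF cnt] lower])
qed

end
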